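(* For every $n\ge 2$, every symmetric pseudo-Boolean function of $n$ variables has a quadratization using at most $n-2$ auxiliary variables.
   Context: A pseudo-Boolean function is a map $f:\{0,1\}^n\to\mathbb{R}$; it is symmetric if its value depends only on the Hamming weight $\sum_j x_j$. A quadratization of $f$ using $m$ auxiliary variables is a polynomial $g(x,y)$ of degree at most $2$ in the variables $x_1,\ldots,x_n,y_1,\ldots,y_m$ such that $f(x)=\min\{g(x,y):y\in\{0,1\}^m\}$ for all $x\in\{0,1\}^n$. *)

theory Defs
  imports Complex_Main
begin

text \<open>Points of the Boolean cube \{0,1\}^n are represented as functions
  nat => real, taking values 0/1 on indices below n and 0 elsewhere.\<close>
definition bcube :: "nat \<Rightarrow> (nat \<Rightarrow> real) set" where
  "bcube n = {x. (\<forall>i<n. x i = 0 \<or> x i = 1) \<and> (\<forall>i\<ge>n. x i = 0)}"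

definition hweight :: "nat \<Rightarrow> (nat \<Rightarrow> real) \<Rightarrow> real" where
  "hweight n x = (\<Sum>j<n. x j)"

definition symmetric_pbf :: "nat \<Rightarrow> ((nat \<Rightarrow> real) \<Rightarrow> real) \<Rightarrow> bool" where
  "symmetric_pbf n f \<longleftrightarrow>
     (\<forall>x\<in>bcube n. \<forall>x'\<in>bcube n. hweight n x = hweight n x' \<longrightarrow> f x = f x')"

definition concat_vars :: "nat \<Rightarrow> (nat \<Rightarrow> real) \<Rightarrow> (nat \<Rightarrow> real) \<Rightarrow> nat \<Rightarrow> real" where
  "concat_vars n x y = (\<lambda>i. if i < n then x i else y (i - n))"

definition quad_poly :: "nat \<Rightarrow> real \<Rightarrow> (nat \<Rightarrow> real) \<Rightarrow> (nat \<Rightarrow> nat \<Rightarrow> real)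
     \<Rightarrow> (nat \<Rightarrow> real) \<Rightarrow> real" where
  "quad_poly N c a Q z = c + (\<Sum>i<N. a i * z i) + (\<Sum>i<N. \<Sum>j<N. Q i j * z i * z j)"

definition is_quadratization ::
  "nat \<Rightarrow> ((nat \<Rightarrow> real) \<Rightarrow> real) \<Rightarrow> nat \<Rightarrow> real \<Rightarrow> (nat \<Rightarrow> real)
     \<Rightarrow> (nat \<Rightarrow> nat \<Rightarrow> real) \<Rightarrow> bool" where
  "is_quadratization n f m c a Q \<longleftrightarrow>
     (\<forall>x\<in>bcube n. f x = Min ((\<lambda>y. quad_poly (n + m) c a Q (concat_vars n x y)) ` bcube m))"

definition has_quadratization :: "nat \<Rightarrow> ((nat \<Rightarrow> real) \<Rightarrow> real) \<Rightarrow> nat \<Rightarrow> bool" where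
  "has_quadratization n f m \<longleftrightarrow> (\<exists>c a Q. is_quadratization n f m c a Q)"

end

theory Submission
  imports Defs
begin

lemma sum_split_add: fixes m :: nat shows "(\<Sum>i<n+m. g i) = (\<Sum>i<n. g i) + (\<Sum>k<m. (g (n+k)::real))"
  by (induction m) (auto simp: add.assoc)

lemma bcube_eq: "bcube m = (\<lambda>S i. if i \<in> S then 1 else 0) ` Pow {..<m}"
proof
  show "bcube m \<subseteq> (\<lambda>S i. if i \<in> S then 1 else 0) ` Pow {..<m}"
  proof
    fix x assume x: "x \<in> bcube m"
    have "x = (\<lambda>i. if i \<in> {i. i < m \<and> x i = 1} then 1 else 0)"
    proof
      fix i show "x i = (if i \<in> {i. i < m \<and> x i = 1} then 1 else 0)"
        using x unfolding bcube_def by (cases "i < m") auto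
    qed
    then show "x \<in> (\<lambda>S i. if i \<in> S then 1 else 0) ` Pow {..<m}" by blast
  qed
next
  show "(\<lambda>S i. if i \<in> S then 1 else 0) ` Pow {..<m} \<subseteq> bcube m"
    unfolding bcube_def by auto
qed

lemma bcube_finite: "finite (bcube m)"
  unfolding bcube_eq by simp

lemma min_lemma:
  "Min ((\<lambda>y. C + (\<Sum>k<m. y k * b k)) ` bcube m) = C + (\<Sum>k<m. min 0 (b k::real))"
proof (rule Min_eqI)
  show "finite ((\<lambda>y. C + (\<Sum>k<m. y k * b k)) ` bcube m)" using bcube_finite by simp
next
  fix v assume "v \<in> (\<lambda>y. C + (\<Sum>k<m. y k * b k)) ` bcube m"
  then obtain y where y: "y \<in> bcube m" and v: "v = C + (\<Sum>k<m. y k * b k)" by blast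
  have "(\<Sum>k<m. min 0 (b k)) \<le> (\<Sum>k<m. y k * b k)"
  proof (rule sum_mono)
    fix k assume "k \<in> {..<m}"
    then have "y k = 0 \<or> y k = 1" using y unfolding bcube_def by auto
    then show "min 0 (b k) \<le> y k * b k" by auto
  qed
  then show "C + (\<Sum>k<m. min 0 (b k)) \<le> v" using v by simp
next
  let ?y = "\<lambda>k. if k < m \<and> b k < 0 then 1 else (0::real)"
  have Y: "?y \<in> bcube m" unfolding bcube_def by auto
  have E: "(\<Sum>k<m. ?y k * b k) = (\<Sum>k<m. min 0 (b k))"
    by (rule sum.cong) auto
  show "C + (\<Sum>k<m. min 0 (b k)) \<in> (\<lambda>y. C + (\<Sum>k<m. y k * b k)) ` bcube m"
    by (rule image_eqI[where x="?y"]) (simp only: E, rule Y)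
qed

lemma quad_eval:
  assumes "a = (\<lambda>i. if i<n then \<beta> else - t (i-n) * s (i-n))"
    and "Q = (\<lambda>i j. if i<n then (if j<n then \<gamma> else t (j-n)) else 0)"
  shows "quad_poly (n+m) c a Q (concat_vars n x y) =
     c + \<beta>*hweight n x + \<gamma>*(hweight n x)^2 + (\<Sum>k<m. y k * (t k * (hweight n x - s k)))"
proof -
  have L: "(\<Sum>i<n+m. a i * concat_vars n x y i) = \<beta> * hweight n x + (\<Sum>k<m. - t k * s k * y k)"
    unfolding sum_split_add assms concat_vars_def hweight_def by (simp add: sum_distrib_left)
  have Q1: "(\<Sum>j<n+m. Q i j * concat_vars n x y i * concat_vars n x y j)
      = (if i < n then \<gamma> * x i * hweight n x + (\<Sum>k<m. t k * x i * y k) else 0)" for i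
    unfolding sum_split_add assms concat_vars_def hweight_def
    by (auto simp: sum_distrib_left mult.assoc)
  have Q2: "(\<Sum>i<n+m. \<Sum>j<n+m. Q i j * concat_vars n x y i * concat_vars n x y j)
      = \<gamma> * (hweight n x)^2 + (\<Sum>k<m. t k * hweight n x * y k)"
  proof -
    have "(\<Sum>i<n+m. \<Sum>j<n+m. Q i j * concat_vars n x y i * concat_vars n x y j)
        = (\<Sum>i<n+m. (if i < n then \<gamma> * x i * hweight n x + (\<Sum>k<m. t k * x i * y k) else 0))"
      by (rule sum.cong[OF refl], rule Q1)
    also have "\<dots> = (\<Sum>i<n. \<gamma> * x i * hweight n x + (\<Sum>k<m. t k * x i * y k))"
      by (subst sum_split_add) simp
    also have "\<dots> = (\<Sum>i<n. \<gamma> * x i * hweight n x) + (\<Sum>i<n. \<Sum>k<m. t k * x i * y k)"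
      by (rule sum.distrib)
    also have "(\<Sum>i<n. \<gamma> * x i * hweight n x) = \<gamma> * (hweight n x)^2"
      by (simp only: hweight_def power2_eq_square sum_distrib_left[symmetric] sum_distrib_right[symmetric] mult.assoc)
    also have "(\<Sum>i<n. \<Sum>k<m. t k * x i * y k) = (\<Sum>k<m. \<Sum>i<n. t k * x i * y k)"
      by (rule sum.swap)
    also have "\<dots> = (\<Sum>k<m. t k * hweight n x * y k)"
      by (simp only: hweight_def sum_distrib_left[symmetric] sum_distrib_right[symmetric])
    finally show ?thesis .
  qed
  have S: "(\<Sum>k<m. y k * (t k * (hweight n x - s k))) = (\<Sum>k<m. - t k * s k * y k) + (\<Sum>k<m. t k * hweight n x * y k)"
    unfolding sum.distrib[symmetric] by (rule sum.cong) (auto simp: algebra_simps)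
  show ?thesis unfolding quad_poly_def L Q2 S by simp
qed


lemma reidx:
  fixes \<phi> :: "nat \<Rightarrow> real"
  assumes k0: "k0 \<in> {1..<n}" and z: "\<phi> k0 = 0"
  shows "(\<Sum>k\<in>{1..<n}. \<phi> k) = (\<Sum>j<n-2. \<phi> (if j+1 < k0 then j+1 else j+2))"
proof -
  define \<sigma> where "\<sigma> j = (if j+1 < k0 then j+1 else j+2)" for j :: nat
  have inj: "inj_on \<sigma> {..<n-2}" unfolding \<sigma>_def by (auto simp: inj_on_def split: if_splits)
  have img: "\<sigma> ` {..<n-2} = {1..<n} - {k0}"
  proof
    show "\<sigma> ` {..<n-2} \<subseteq> {1..<n} - {k0}" using k0 unfolding \<sigma>_def by auto
  next
    show "{1..<n} - {k0} \<subseteq> \<sigma> ` {..<n-2}"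
    proof
      fix k assume k: "k \<in> {1..<n} - {k0}"
      show "k \<in> \<sigma> ` {..<n-2}"
      proof (cases "k < k0")
        case True
        then show ?thesis using k k0 unfolding \<sigma>_def by (intro image_eqI[where x="k-1"]) auto
      next
        case False
        then show ?thesis using k k0 unfolding \<sigma>_def by (intro image_eqI[where x="k-2"]) auto
      qed
    qed
  qed
  have "(\<Sum>j<n-2. \<phi> (\<sigma> j)) = (\<Sum>k\<in>\<sigma> ` {..<n-2}. \<phi> k)"
    using sum.reindex[OF inj, of \<phi>] by simp
  also have "\<dots> = (\<Sum>k\<in>{1..<n}. \<phi> k) - \<phi> k0"
    unfolding img using k0 by (simp add: sum_diff1)
  finally show ?thesis using z unfolding \<sigma>_def by simp
qed

lemma pt: "real (w+2-k) - 2*real (w+1-k) + real (w-k) = (if k = w+1 then 1 else 0)"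
  for w k :: nat
  by (cases "k \<le> w"; cases "k = w+1") auto

lemma oneD:
  fixes F :: "nat \<Rightarrow> real" and n :: nat
  assumes n: "n \<ge> 2"
  shows "\<exists>c \<beta> \<gamma> (t::nat\<Rightarrow>real) (s::nat\<Rightarrow>real). \<forall>w\<le>n.
     F w = c + \<beta>*real w + \<gamma>*(real w)^2 + (\<Sum>j<n-2. min 0 (t j * (real w - s j)))"
proof -
  define D where "D k = F (k+1) - 2*F k + F (k-1)" for k
  have fin: "finite (D ` {1..<n})" and ne: "D ` {1..<n} \<noteq> {}" using n by auto
  obtain k0 where k0: "k0 \<in> {1..<n}" "D k0 = Max (D ` {1..<n})" using Max_in[OF fin ne] by auto
  have Dle: "D k \<le> D k0" if "k \<in> {1..<n}" for k using k0 fin that by simp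
  define \<gamma> where "\<gamma> = D k0 / 2"
  define h where "h w = F w - \<gamma> * (real w)^2" for w
  define E where "E k = h (k+1) - 2*h k + h (k-1)" for k
  have E_eq: "E k = D k - D k0" if "k \<ge> 1" for k
  proof -
    have r: "real (k-1) = real k - 1" using that by simp
    have "E k = D k - \<gamma>*((real (k+1))^2 - 2*(real k)^2 + (real (k-1))^2)"
      unfolding E_def h_def D_def by (simp add: algebra_simps)
    also have "(real (k+1))^2 - 2*(real k)^2 + (real (k-1))^2 = 2"
      unfolding r by (simp add: power2_eq_square algebra_simps)
    finally show ?thesis unfolding \<gamma>_def by simp
  qed
  have Ele: "E k \<le> 0" if "k \<in> {1..<n}" for k using E_eq Dle that by force
  have E0: "E k0 = 0" using E_eq k0 by simp
  define G where "G w = h 0 + (h 1 - h 0) * real w + (\<Sum>k\<in>{1..<n}. E k * real (w - k))" for w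
  have G2: "G (w+2) = 2*G(w+1) - G w + E (w+1)" if "w+2 \<le> n" for w
  proof -
    have "(\<Sum>k\<in>{1..<n}. E k * real (w+2-k)) - 2*(\<Sum>k\<in>{1..<n}. E k * real (w+1-k))
        + (\<Sum>k\<in>{1..<n}. E k * real (w-k))
        = (\<Sum>k\<in>{1..<n}. E k * (real (w+2-k) - 2*real (w+1-k) + real (w-k)))"
      by (simp add: algebra_simps sum.distrib sum_subtractf sum_distrib_left)
    also have "\<dots> = (\<Sum>k\<in>{1..<n}. if k = w+1 then E k else 0)"
      by (intro sum.cong) (auto simp: pt)
    also have "\<dots> = E (w+1)" using that by (simp add: sum.delta')
    finally have "(\<Sum>k\<in>{1..<n}. E k * real (w+2-k)) - 2*(\<Sum>k\<in>{1..<n}. E k * real (w+1-k))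
        + (\<Sum>k\<in>{1..<n}. E k * real (w-k)) = E (w+1)" .
    then show ?thesis unfolding G_def by (simp add: algebra_simps)
  qed
  have hG: "w \<le> n \<Longrightarrow> G w = h w" for w
  proof (induction w rule: less_induct)
    case (less w)
    have "w = 0 \<or> w = 1 \<or> (\<exists>v. w = v+2)" by presburger
    then show ?case
    proof (elim disjE exE)
      assume "w = 0" then show ?thesis unfolding G_def by simp
    next
      assume w: "w = 1"
      have "(\<Sum>k\<in>{1..<n}. E k * real (1 - k)) = 0" by (intro sum.neutral) auto
      then show ?thesis unfolding G_def w by simp
    next
      fix v assume w: "w = v+2"
      have "G w = 2*G(v+1) - G v + E (v+1)" using G2 less.prems w by simp
      also have "\<dots> = 2*h(v+1) - h v + E (v+1)" using less w by simp
      also have "\<dots> = h w" unfolding E_def w by simp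
      finally show ?thesis .
    qed
  qed
  define c where "c = h 0"
  define \<beta> where "\<beta> = h 1 - h 0"
  define \<sigma> where "\<sigma> j = (if j+1 < k0 then j+1 else j+2)" for j :: nat
  show ?thesis
  proof (intro exI allI impI)
    fix w assume w: "w \<le> n"
    have A: "F w = \<gamma> * (real w)^2 + G w" using hG[OF w] unfolding h_def by simp
    have B: "(\<Sum>k\<in>{1..<n}. E k * real (w - k)) = (\<Sum>k\<in>{1..<n}. min 0 (E k * (real w - real k)))"
    proof (intro sum.cong refl)
      fix k assume k: "k \<in> {1..<n}"
      show "E k * real (w - k) = min 0 (E k * (real w - real k))"
      proof (cases "k \<le> w")
        case True
        then have "real (w-k) = real w - real k" by simp
        moreover have "E k * (real w - real k) \<le> 0" using Ele[OF k] True by (intro mult_nonpos_nonneg) auto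
        ultimately show ?thesis by (simp add: min_def)
      next
        case False
        then show ?thesis using Ele[OF k] by (simp add: mult_nonpos_nonpos min_def)
      qed
    qed
    also have "\<dots> = (\<Sum>j<n-2. min 0 (E (\<sigma> j) * (real w - real (\<sigma> j))))"
      unfolding \<sigma>_def by (rule reidx[OF k0(1)]) (simp add: E0)
    finally have B: "(\<Sum>k\<in>{1..<n}. E k * real (w - k)) = (\<Sum>j<n-2. min 0 (E (\<sigma> j) * (real w - real (\<sigma> j))))" .
    show "F w = c + \<beta>*real w + \<gamma>*(real w)^2 + (\<Sum>j<n-2. min 0 ((E \<circ> \<sigma>) j * (real w - (real \<circ> \<sigma>) j)))"
      unfolding A G_def c_def \<beta>_def B by (simp add: algebra_simps)
  qed
qed


lemma hweight_card:
  assumes x: "x \<in> bcube n"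
  shows "hweight n x = real (card ({..<n} \<inter> {i. x i = 1}))"
proof -
  have "hweight n x = (\<Sum>i<n. if x i = 1 then 1 else 0)"
    unfolding hweight_def using x unfolding bcube_def by (intro sum.cong) auto
  also have "\<dots> = real (card ({..<n} \<inter> {i. x i = 1}))"
    by (simp add: sum.If_cases)
  finally show ?thesis .
qed

theorem theorem3:
  fixes n :: nat and f :: "(nat \<Rightarrow> real) \<Rightarrow> real"
  assumes "n \<ge> 2" and "symmetric_pbf n f"
  shows "\<exists>m\<le>n - 2. has_quadratization n f m"
proof -
  define e where "e N = (\<lambda>i. if i < N then (1::real) else 0)" for N :: nat
  define F where "F N = f (e N)" for N
  obtain c \<beta> \<gamma> t s where 1: "\<forall>w\<le>n.
     F w = c + \<beta>*real w + \<gamma>*(real w)^2 + (\<Sum>j<n-2. min 0 (t j * (real w - s j)))"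
    using oneD[OF assms(1), of F] by blast
  define m where "m = n - 2"
  define a where "a = (\<lambda>i. if i<n then \<beta> else - t (i-n) * s (i-n))"
  define Q where "Q = (\<lambda>i j. if i<n then (if j<n then \<gamma> else t (j-n)) else (0::real))"
  have "is_quadratization n f m c a Q"
    unfolding is_quadratization_def
  proof
    fix x assume x: "x \<in> bcube n"
    define N where "N = card ({..<n} \<inter> {i. x i = 1})"
    have hw: "hweight n x = real N" using hweight_card[OF x] N_def by simp
    have Nn: "N \<le> n" unfolding N_def by (metis card_lessThan card_mono finite_lessThan inf_le1)
    have eN: "e N \<in> bcube n" unfolding bcube_def e_def using Nn by auto
    have hwe: "hweight n (e N) = real N"
    proof -
      have "hweight n (e N) = (\<Sum>i<N + (n-N). e N i)" unfolding hweight_def using Nn by simp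
      also have "\<dots> = real N" unfolding sum_split_add e_def by simp
      finally show ?thesis .
    qed
    have hh: "hweight n x = hweight n (e N)" using hw hwe by simp
    have fx: "f x = F N" unfolding F_def using assms(2) x eN hh unfolding symmetric_pbf_def by blast
    have "Min ((\<lambda>y. quad_poly (n + m) c a Q (concat_vars n x y)) ` bcube m)
       = Min ((\<lambda>y. (c + \<beta>*real N + \<gamma>*(real N)^2) + (\<Sum>k<m. y k * (t k * (real N - s k)))) ` bcube m)"
      by (intro arg_cong[where f=Min] image_cong refl) (simp only: quad_eval[OF a_def Q_def] hw)
    also have "\<dots> = (c + \<beta>*real N + \<gamma>*(real N)^2) + (\<Sum>k<m. min 0 (t k * (real N - s k)))"
      by (rule min_lemma)
    also have "\<dots> = F N" using 1 Nn unfolding m_def by simp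
    finally show "f x = Min ((\<lambda>y. quad_poly (n + m) c a Q (concat_vars n x y)) ` bcube m)"
      using fx by simp
  qed
  then have "has_quadratization n f m" unfolding has_quadratization_def by blast
  then show ?thesis unfolding m_def by blast
qed

end
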